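(* Let $\beta_1<\beta_2<\alpha_1<\alpha_2$ be reals and $C_{\alpha_1},C_{\alpha_2},C_{\beta_1},C_{\beta_2}$ nonzero reals. There exist polynomials $A(x)=\sum_{k=0}^4A_kx^{4-k}$ and $B(y)=\sum_{k=0}^4B_ky^{4-k}$ of degree at most $4$ such that $A(\alpha_i)=0$, $B(\beta_i)=0$, $A'(\alpha_i)=2/C_{\alpha_i}$, $B'(\beta_i)=-2/C_{\beta_i}$ ($i=1,2$) and $A_0=-B_0$, $A_1=-B_1$, $A_2=-B_2$, if and only if $$\frac{(\alpha_1+\alpha_2)^2+2\alpha_2^2+(\beta_1+\beta_2)^2+2\beta_1\beta_2-2(2\alpha_2+\alpha_1)(\beta_1+\beta_2)}{(\alpha_2-\alpha_1)^2C_{\alpha_1}}+\frac{(\alpha_1+\alpha_2)^2+2\alpha_1^2+(\beta_1+\beta_2)^2+2\beta_1\beta_2-2(2\alpha_1+\alpha_2)(\beta_1+\beta_2)}{(\alpha_2-\alpha_1)^2C_{\alpha_2}}$$ $$+\frac{(\beta_1+\beta_2)^2+2\beta_2^2+(\alpha_1+\alpha_2)^2+2\alpha_1\alpha_2-2(2\beta_2+\beta_1)(\alpha_1+\alpha_2)}{(\beta_2-\beta_1)^2C_{\beta_1}}+\frac{(\beta_1+\beta_2)^2+2\beta_1^2+(\alpha_1+\alpha_2)^2+2\alpha_1\alpha_2-2(2\beta_1+\beta_2)(\alpha_1+\alpha_2)}{(\beta_2-\beta_1)^2C_{\beta_2}}=0.$$ In this case $A$ and $B$ are uniquely determined. They have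 $A_0=0$ if and only if $$\frac1{(\alpha_2-\alpha_1)^2}\Big(\frac1{C_{\alpha_1}}+\frac1{C_{\alpha_2}}\Big)=\frac1{(\beta_2-\beta_1)^2}\Big(\frac1{C_{\beta_1}}+\frac1{C_{\beta_2}}\Big),$$ and, when both previous equations hold, they satisfy $A_0=0$ and $A_3=-B_3$ if additionally $$\frac1{(\alpha_2-\alpha_1)^2}\Big(\frac{\alpha_2(2\alpha_1+\alpha_2)}{C_{\alpha_1}}+\frac{\alpha_1(2\alpha_2+\alpha_1)}{C_{\alpha_2}}\Big)=\frac1{(\beta_2-\beta_1)^2}\Big(\frac{\beta_2(2\beta_1+\beta_2)}{C_{\beta_1}}+\frac{\beta_1(2\beta_2+\beta_1)}{C_{\beta_2}}\Big).$$ *)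

theory Defs
  imports "HOL-Computational_Algebra.Polynomial"
begin

text \<open>A polynomial A(x) = sum_{k=0}^4 A_k x^(4-k) of degree at most 4 is a real poly
  with degree at most 4; its paper coefficient A_k is coeff A (4 - k).\<close>

definition AB_conditions ::
  "real \<Rightarrow> real \<Rightarrow> real \<Rightarrow> real \<Rightarrow> real \<Rightarrow> real \<Rightarrow> real \<Rightarrow> real \<Rightarrow> real poly \<Rightarrow> real poly \<Rightarrow> bool"
  where
  "AB_conditions a1 a2 b1 b2 Ca1 Ca2 Cb1 Cb2 A B \<longleftrightarrow>
     degree A \<le> 4 \<and> degree B \<le> 4 \<and>
     poly A a1 = 0 \<and> poly A a2 = 0 \<and> poly B b1 = 0 \<and> poly B b2 = 0 \<and>
     poly (pderiv A) a1 = 2 / Ca1 \<and> poly (pderiv A) a2 = 2 / Ca2 \<and>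
     poly (pderiv B) b1 = - 2 / Cb1 \<and> poly (pderiv B) b2 = - 2 / Cb2 \<and>
     coeff A 4 = - coeff B 4 \<and> coeff A 3 = - coeff B 3 \<and> coeff A 2 = - coeff B 2"

end

theory Submission
  imports Defs
begin

lemma poly4:
  fixes p :: "real poly"
  assumes d: "degree p \<le> 4"
  shows "poly p x = coeff p 0 + coeff p 1 * x + coeff p 2 * x^2 + coeff p 3 * x^3 + coeff p 4 * x^4"
proof -
  have "poly p x = (\<Sum>i\<le>degree p. coeff p i * x^i)" by (rule poly_altdef)
  also have "\<dots> = (\<Sum>i\<le>4. coeff p i * x^i)"
    by (rule sum.mono_neutral_left) (auto simp: coeff_eq_0 d)
  also have "\<dots> = coeff p 0 + coeff p 1 * x + coeff p 2 * x^2 + coeff p 3 * x^3 + coeff p 4 * x^4"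
    by (simp add: eval_nat_numeral)
  finally show ?thesis .
qed

lemma pderiv4:
  fixes p :: "real poly"
  assumes d: "degree p \<le> 4"
  shows "poly (pderiv p) x = coeff p 1 + 2 * coeff p 2 * x + 3 * coeff p 3 * x^2 + 4 * coeff p 4 * x^3"
proof -
  have d': "degree (pderiv p) \<le> 4" using d by (simp add: degree_pderiv)
  have c5: "coeff p 5 = 0" using d by (simp add: coeff_eq_0)
  show ?thesis using poly4[OF d', of x] c5 by (simp add: coeff_pderiv eval_nat_numeral)
qed

lemma cubic0:
  fixes a1 a2 d0 d1 d2 d3 :: real
  assumes ne: "a1 \<noteq> a2"
    and h0: "d0 + d1*a1 + d2*a1^2 + d3*a1^3 = 0"
    and h1: "d0 + d1*a2 + d2*a2^2 + d3*a2^3 = 0"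
    and h2: "d1 + 2*d2*a1 + 3*d3*a1^2 = 0"
    and h3: "d1 + 2*d2*a2 + 3*d3*a2^2 = 0"
  shows "d0 = 0 \<and> d1 = 0 \<and> d2 = 0 \<and> d3 = 0"
proof -
  have "(a2-a1)*(d1 + d2*(a1+a2) + d3*(a1^2+a1*a2+a2^2)) = 0" using h0 h1 by algebra
  hence K1: "d1 + d2*(a1+a2) + d3*(a1^2+a1*a2+a2^2) = 0" using ne by simp
  have "(a2-a1)*(2*d2+3*d3*(a1+a2)) = 0" using h2 h3 by algebra
  hence K2: "2*d2+3*d3*(a1+a2) = 0" using ne by simp
  have "(a1-a2)*(d2 + d3*(2*a1+a2)) = 0" using h2 K1 by algebra
  hence K3: "d2 + d3*(2*a1+a2) = 0" using ne by simp
  have "d3*(a1-a2) = 0" using K2 K3 by algebra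
  hence z3: "d3 = 0" using ne by simp
  hence z2: "d2 = 0" using K3 by simp
  hence z1: "d1 = 0" using K1 z3 by simp
  hence "d0 = 0" using h0 z2 z3 by simp
  thus ?thesis using z1 z2 z3 by simp
qed

definition mA :: "real \<Rightarrow> real \<Rightarrow> real \<Rightarrow> real \<Rightarrow> real" where
  "mA a1 a2 g1 g2 = (g1+g2)/(a2-a1)^2"
definition lA :: "real \<Rightarrow> real \<Rightarrow> real \<Rightarrow> real \<Rightarrow> real" where
  "lA a1 a2 g1 g2 = -(g1*a2+g2*a1)/(a2-a1)^2"

definition HE where
  "HE a1 a2 g1 g2 c0 c1 c2 c3 c4 \<longleftrightarrow>
     c0 + c1*a1 + c2*a1^2 + c3*a1^3 + c4*a1^4 = 0 \<and>
     c0 + c1*a2 + c2*a2^2 + c3*a2^3 + c4*a2^4 = 0 \<and>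
     c1 + 2*c2*a1 + 3*c3*a1^2 + 4*c4*a1^3 = g1 \<and>
     c1 + 2*c2*a2 + 3*c3*a2^2 + 4*c4*a2^3 = g2"

definition HF where
  "HF a1 a2 g1 g2 c0 c1 c2 c3 c4 \<longleftrightarrow>
    (let m = mA a1 a2 g1 g2; l = lA a1 a2 g1 g2 in
     c3 = -2*(a1+a2)*c4 + m \<and>
     c2 = ((a1+a2)^2+2*(a1*a2))*c4 + l - (a1+a2)*m \<and>
     c1 = -2*(a1+a2)*(a1*a2)*c4 + (a1*a2)*m - (a1+a2)*l \<and>
     c0 = (a1*a2)^2*c4 + (a1*a2)*l)"

lemma herm:
  fixes a1 a2 g1 g2 c0 c1 c2 c3 c4 :: real
  assumes ne: "a1 \<noteq> a2"
  shows "HE a1 a2 g1 g2 c0 c1 c2 c3 c4 \<longleftrightarrow> HF a1 a2 g1 g2 c0 c1 c2 c3 c4"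
proof -
  define m where "m = mA a1 a2 g1 g2"
  define l where "l = lA a1 a2 g1 g2"
  have ne2: "a2 - a1 \<noteq> 0" using ne by simp
  have hM: "(a2-a1)^2 * m = g1+g2" unfolding m_def mA_def using ne2 by simp
  have hL: "(a2-a1)^2 * l = -(g1*a2+g2*a1)" unfolding l_def lA_def using ne2 by simp
  have "(a2-a1)^2 * ((a1-a2)*(m*a1+l) - g1) = 0" using hM hL by algebra
  hence hm1: "(a1-a2)*(m*a1+l) = g1" using ne2 by simp
  have "(a2-a1)^2 * ((a2-a1)*(m*a2+l) - g2) = 0" using hM hL by algebra
  hence hm2: "(a2-a1)*(m*a2+l) = g2" using ne2 by simp
  define f3 where "f3 = -2*(a1+a2)*c4 + m"
  define f2 where "f2 = ((a1+a2)^2+2*(a1*a2))*c4 + l - (a1+a2)*m"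
  define f1 where "f1 = -2*(a1+a2)*(a1*a2)*c4 + (a1*a2)*m - (a1+a2)*l"
  define f0 where "f0 = (a1*a2)^2*c4 + (a1*a2)*l"
  have F: "HE a1 a2 g1 g2 f0 f1 f2 f3 c4"
    unfolding HE_def f0_def f1_def f2_def f3_def
    apply (intro conjI)
    subgoal by algebra
    subgoal by algebra
    subgoal by (subst hm1[symmetric]) algebra
    subgoal by (subst hm2[symmetric]) algebra
    done
  have HFe: "HF a1 a2 g1 g2 c0 c1 c2 c3 c4 \<longleftrightarrow> c3 = f3 \<and> c2 = f2 \<and> c1 = f1 \<and> c0 = f0"
    unfolding HF_def Let_def f0_def f1_def f2_def f3_def m_def l_def by simp
  show ?thesis
  proof
    assume H: "HE a1 a2 g1 g2 c0 c1 c2 c3 c4"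
    have "c0 - f0 = 0 \<and> c1 - f1 = 0 \<and> c2 - f2 = 0 \<and> c3 - f3 = 0"
      apply (rule cubic0[OF ne])
      using H F unfolding HE_def by algebra+
    thus "HF a1 a2 g1 g2 c0 c1 c2 c3 c4" using HFe by simp
  next
    assume "HF a1 a2 g1 g2 c0 c1 c2 c3 c4"
    thus "HE a1 a2 g1 g2 c0 c1 c2 c3 c4" using HFe F by simp
  qed
qed


lemma AB_iff:
  "AB_conditions a1 a2 b1 b2 Ca1 Ca2 Cb1 Cb2 A B \<longleftrightarrow>
    degree A \<le> 4 \<and> degree B \<le> 4 \<and>
    HE a1 a2 (2/Ca1) (2/Ca2) (coeff A 0) (coeff A 1) (coeff A 2) (coeff A 3) (coeff A 4) \<and>
    HE b1 b2 (-2/Cb1) (-2/Cb2) (coeff B 0) (coeff B 1) (coeff B 2) (coeff B 3) (coeff B 4) \<and>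
    coeff A 4 = - coeff B 4 \<and> coeff A 3 = - coeff B 3 \<and> coeff A 2 = - coeff B 2"
  by (auto simp: AB_conditions_def HE_def poly4 pderiv4)

definition hpoly :: "real \<Rightarrow> real \<Rightarrow> real \<Rightarrow> real \<Rightarrow> real \<Rightarrow> real poly" where
  "hpoly a1 a2 g1 g2 s = (let m = mA a1 a2 g1 g2; l = lA a1 a2 g1 g2 in
     [: (a1*a2)^2*s + (a1*a2)*l, -2*(a1+a2)*(a1*a2)*s + (a1*a2)*m - (a1+a2)*l,
        ((a1+a2)^2+2*(a1*a2))*s + l - (a1+a2)*m, -2*(a1+a2)*s + m, s :])"

lemma hpoly_deg: "degree (hpoly a1 a2 g1 g2 s) \<le> 4"
  unfolding hpoly_def Let_def by (auto simp: degree_pCons_eq_if)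

lemma hpoly_HF: "HF a1 a2 g1 g2 (coeff (hpoly a1 a2 g1 g2 s) 0) (coeff (hpoly a1 a2 g1 g2 s) 1)
   (coeff (hpoly a1 a2 g1 g2 s) 2) (coeff (hpoly a1 a2 g1 g2 s) 3) (coeff (hpoly a1 a2 g1 g2 s) 4)
   \<and> coeff (hpoly a1 a2 g1 g2 s) 4 = s"
  unfolding hpoly_def HF_def Let_def by (simp add: numeral_eq_Suc)

lemma HF_unique:
  assumes "degree A \<le> 4" "HF a1 a2 g1 g2 (coeff A 0) (coeff A 1) (coeff A 2) (coeff A 3) (coeff A 4)"
  shows "A = hpoly a1 a2 g1 g2 (coeff A 4)"
proof (rule poly_eqI)
  fix i
  show "coeff A i = coeff (hpoly a1 a2 g1 g2 (coeff A 4)) i"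
  proof (cases "i \<le> 4")
    case True
    hence "i = 0 \<or> i = 1 \<or> i = 2 \<or> i = 3 \<or> i = 4" by auto
    thus ?thesis using assms(2) unfolding hpoly_def HF_def Let_def
      by (auto simp: numeral_eq_Suc)
  next
    case False
    thus ?thesis using assms(1) hpoly_deg[of a1 a2 g1 g2 "coeff A 4"]
      by (simp add: coeff_eq_0)
  qed
qed

lemma link:
  fixes sa sb m n l k s t qa qb :: real
  assumes ne: "sa \<noteq> sb"
  shows "(s = -t \<and> -2*sa*s + m = -(-2*sb*t + n) \<and> qa*s + l - sa*m = -(qb*t + k - sb*n)) \<longleftrightarrow>
    (s = (m+n)/(2*(sa-sb)) \<and> t = -s \<and> (sa-sb)*((m+n)/(2*(sa-sb))*(qa - qb) + l - sa*m + k - sb*n) = 0)"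
proof -
  have ne2: "sa - sb \<noteq> 0" using ne by simp
  have e: "-2*sa*s + m = -(-2*sb*(-s) + n) \<longleftrightarrow> s = (m+n)/(2*(sa-sb))"
    using ne2 by (auto simp: field_simps)
  have f: "s = (m+n)/(2*(sa-sb)) \<Longrightarrow> (qa*s + l - sa*m = -(qb*(-s) + k - sb*n) \<longleftrightarrow>
      (sa-sb)*((m+n)/(2*(sa-sb))*(qa - qb) + l - sa*m + k - sb*n) = 0)"
  proof -
    assume s: "s = (m+n)/(2*(sa-sb))"
    have "qa*s + l - sa*m = -(qb*(-s) + k - sb*n) \<longleftrightarrow> s*(qa-qb) + l - sa*m + k - sb*n = 0"
      by (auto simp: algebra_simps)
    also have "\<dots> \<longleftrightarrow> (sa-sb)*(s*(qa-qb) + l - sa*m + k - sb*n) = 0" using ne2 by simp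
    finally show ?thesis using s by simp
  qed
  show ?thesis
  proof
    assume H: "s = -t \<and> -2*sa*s + m = -(-2*sb*t + n) \<and> qa*s + l - sa*m = -(qb*t + k - sb*n)"
    hence t: "t = -s" by simp
    have "-2*sa*s + m = -(-2*sb*(-s) + n)" using H t by simp
    hence s: "s = (m+n)/(2*(sa-sb))" using e by blast
    show "s = (m+n)/(2*(sa-sb)) \<and> t = -s \<and> (sa-sb)*((m+n)/(2*(sa-sb))*(qa - qb) + l - sa*m + k - sb*n) = 0"
      using H t s f by auto
  next
    assume H: "s = (m+n)/(2*(sa-sb)) \<and> t = -s \<and> (sa-sb)*((m+n)/(2*(sa-sb))*(qa - qb) + l - sa*m + k - sb*n) = 0"
    hence t: "t = -s" by simp
    show "s = -t \<and> -2*sa*s + m = -(-2*sb*t + n) \<and> qa*s + l - sa*m = -(qb*t + k - sb*n)"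
      using H t e f by auto
  qed
qed


lemma restr: fixes d M Q l p k q :: real
  shows "d \<noteq> 0 \<Longrightarrow> d*(M/(2*d)*Q + l - p + k - q) = (M/2)*Q + d*(l-p+k-q)"
  by (simp add: field_simps)

lemma compatE0:
  fixes a1 a2 b1 b2 Ca1 Ca2 Cb1 Cb2 :: real
  assumes "b1 < b2" "b2 < a1" "a1 < a2"
    and "Ca1 \<noteq> 0" "Ca2 \<noteq> 0" "Cb1 \<noteq> 0" "Cb2 \<noteq> 0"
  shows "((a1+a2)-(b1+b2)) * ((mA a1 a2 (2/Ca1) (2/Ca2) + mA b1 b2 (-2/Cb1) (-2/Cb2)) / (2*((a1+a2)-(b1+b2)))
     * ((a1+a2)^2 + 2*(a1*a2) - (b1+b2)^2 - 2*(b1*b2))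
     + lA a1 a2 (2/Ca1) (2/Ca2) - (a1+a2) * mA a1 a2 (2/Ca1) (2/Ca2)
     + lA b1 b2 (-2/Cb1) (-2/Cb2) - (b1+b2) * mA b1 b2 (-2/Cb1) (-2/Cb2)) =
   - (((a1 + a2)^2 + 2 * a2^2 + (b1 + b2)^2 + 2 * b1 * b2 - 2 * (2 * a2 + a1) * (b1 + b2))
        / ((a2 - a1)^2 * Ca1)
    + ((a1 + a2)^2 + 2 * a1^2 + (b1 + b2)^2 + 2 * b1 * b2 - 2 * (2 * a1 + a2) * (b1 + b2))
        / ((a2 - a1)^2 * Ca2)
    + ((b1 + b2)^2 + 2 * b2^2 + (a1 + a2)^2 + 2 * a1 * a2 - 2 * (2 * b2 + b1) * (a1 + a2))
        / ((b2 - b1)^2 * Cb1)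
    + ((b1 + b2)^2 + 2 * b1^2 + (a1 + a2)^2 + 2 * a1 * a2 - 2 * (2 * b1 + b2) * (a1 + a2))
        / ((b2 - b1)^2 * Cb2))"
proof -
  define w1 where "w1 = 1/Ca1"
  define w2 where "w2 = 1/Ca2"
  define w3 where "w3 = 1/Cb1"
  define w4 where "w4 = 1/Cb2"
  define ia where "ia = 1/(a2-a1)^2"
  define ib where "ib = 1/(b2-b1)^2"
  have d: "(a1+a2)-(b1+b2) \<noteq> 0" using assms by auto
  have e1: "mA a1 a2 (2/Ca1) (2/Ca2) = 2*(w1+w2)*ia"
    unfolding mA_def w1_def w2_def ia_def by simp
  have e2: "mA b1 b2 (-2/Cb1) (-2/Cb2) = -2*(w3+w4)*ib"
    unfolding mA_def w3_def w4_def ib_def by simp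
  have e3: "lA a1 a2 (2/Ca1) (2/Ca2) = -2*(w1*a2+w2*a1)*ia"
    unfolding lA_def w1_def w2_def ia_def by simp
  have e4: "lA b1 b2 (-2/Cb1) (-2/Cb2) = 2*(w3*b2+w4*b1)*ib"
    unfolding lA_def w3_def w4_def ib_def by simp
  have e5: "X / ((a2 - a1)^2 * Ca1) = X*w1*ia" "X / ((a2 - a1)^2 * Ca2) = X*w2*ia"
     "X / ((b2 - b1)^2 * Cb1) = X*w3*ib" "X / ((b2 - b1)^2 * Cb2) = X*w4*ib" for X
    unfolding w1_def w2_def w3_def w4_def ia_def ib_def by simp_all
  show ?thesis unfolding e1 e2 e3 e4 e5 restr[OF d] by algebra
qed

lemma mnF:
  fixes a1 a2 b1 b2 Ca1 Ca2 Cb1 Cb2 :: real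
  assumes "b1 < b2" "a1 < a2"
    and "Ca1 \<noteq> 0" "Ca2 \<noteq> 0" "Cb1 \<noteq> 0" "Cb2 \<noteq> 0"
  shows "mA a1 a2 (2/Ca1) (2/Ca2) + mA b1 b2 (-2/Cb1) (-2/Cb2) =
     2 * (1 / (a2 - a1)^2 * (1 / Ca1 + 1 / Ca2) - 1 / (b2 - b1)^2 * (1 / Cb1 + 1 / Cb2))"
proof -
  have h1: "(a2-a1)^2 \<noteq> 0" "(b2-b1)^2 \<noteq> 0" using assms by auto
  show ?thesis unfolding mA_def lA_def using h1 assms(3-6)
    by (simp add: field_simps)
qed

lemma GG:
  fixes a1 a2 b1 b2 Ca1 Ca2 Cb1 Cb2 :: real
  assumes "b1 < b2" "a1 < a2"
    and "Ca1 \<noteq> 0" "Ca2 \<noteq> 0" "Cb1 \<noteq> 0" "Cb2 \<noteq> 0"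
  shows "(a1*a2) * mA a1 a2 (2/Ca1) (2/Ca2) - (a1+a2) * lA a1 a2 (2/Ca1) (2/Ca2)
     + ((b1*b2) * mA b1 b2 (-2/Cb1) (-2/Cb2) - (b1+b2) * lA b1 b2 (-2/Cb1) (-2/Cb2)) =
     2 * (1 / (a2 - a1)^2 * (a2 * (2 * a1 + a2) / Ca1 + a1 * (2 * a2 + a1) / Ca2)
        - 1 / (b2 - b1)^2 * (b2 * (2 * b1 + b2) / Cb1 + b1 * (2 * b2 + b1) / Cb2))"
proof -
  have h1: "(a2-a1)^2 \<noteq> 0" "(b2-b1)^2 \<noteq> 0" using assms by auto
  show ?thesis unfolding mA_def lA_def using h1 assms(3-6)
    by (simp add: field_simps)
qed

lemma two_diff_eq: "2*(x-y) = 0 \<longleftrightarrow> x = (y::real)" by simp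

theorem mainTheorem7:
  fixes a1 a2 b1 b2 Ca1 Ca2 Cb1 Cb2 :: real
  assumes "b1 < b2" "b2 < a1" "a1 < a2"
    and "Ca1 \<noteq> 0" "Ca2 \<noteq> 0" "Cb1 \<noteq> 0" "Cb2 \<noteq> 0"
  defines "E \<equiv>
      ((a1 + a2)^2 + 2 * a2^2 + (b1 + b2)^2 + 2 * b1 * b2 - 2 * (2 * a2 + a1) * (b1 + b2))
        / ((a2 - a1)^2 * Ca1)
    + ((a1 + a2)^2 + 2 * a1^2 + (b1 + b2)^2 + 2 * b1 * b2 - 2 * (2 * a1 + a2) * (b1 + b2))
        / ((a2 - a1)^2 * Ca2)
    + ((b1 + b2)^2 + 2 * b2^2 + (a1 + a2)^2 + 2 * a1 * a2 - 2 * (2 * b2 + b1) * (a1 + a2))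
        / ((b2 - b1)^2 * Cb1)
    + ((b1 + b2)^2 + 2 * b1^2 + (a1 + a2)^2 + 2 * a1 * a2 - 2 * (2 * b1 + b2) * (a1 + a2))
        / ((b2 - b1)^2 * Cb2)"
    and "F \<equiv> 1 / (a2 - a1)^2 * (1 / Ca1 + 1 / Ca2) = 1 / (b2 - b1)^2 * (1 / Cb1 + 1 / Cb2)"
    and "G \<equiv> 1 / (a2 - a1)^2 * (a2 * (2 * a1 + a2) / Ca1 + a1 * (2 * a2 + a1) / Ca2)
              = 1 / (b2 - b1)^2 * (b2 * (2 * b1 + b2) / Cb1 + b1 * (2 * b2 + b1) / Cb2)"
  shows "((\<exists>A B. AB_conditions a1 a2 b1 b2 Ca1 Ca2 Cb1 Cb2 A B) \<longleftrightarrow> E = 0)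
    \<and> (E = 0 \<longrightarrow> (\<exists>!AB. AB_conditions a1 a2 b1 b2 Ca1 Ca2 Cb1 Cb2 (fst AB) (snd AB)))
    \<and> (\<forall>A B. AB_conditions a1 a2 b1 b2 Ca1 Ca2 Cb1 Cb2 A B \<longrightarrow> (coeff A 4 = 0 \<longleftrightarrow> F))
    \<and> (\<forall>A B. AB_conditions a1 a2 b1 b2 Ca1 Ca2 Cb1 Cb2 A B \<longrightarrow> F \<longrightarrow> G \<longrightarrow>
          coeff A 4 = 0 \<and> coeff A 1 = - coeff B 1)"
proof -
  define g1 where "g1 = 2/Ca1"
  define g2 where "g2 = 2/Ca2"
  define g3 where "g3 = -2/Cb1"
  define g4 where "g4 = -2/Cb2"
  define m where "m = mA a1 a2 g1 g2"
  define l where "l = lA a1 a2 g1 g2"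
  define n where "n = mA b1 b2 g3 g4"
  define k where "k = lA b1 b2 g3 g4"
  define sa where "sa = a1+a2"
  define sb where "sb = b1+b2"
  define s0 where "s0 = (m+n)/(2*(sa-sb))"
  have nea: "a1 \<noteq> a2" and neb: "b1 \<noteq> b2" and nes: "sa \<noteq> sb"
    using assms(1-3) unfolding sa_def sb_def by auto
  have qq: "((a1+a2)^2 + 2*(a1*a2)) - ((b1+b2)^2 + 2*(b1*b2)) = (a1+a2)^2 + 2*(a1*a2) - (b1+b2)^2 - 2*(b1*b2)" by simp
  have cE: "(sa-sb)*((m+n)/(2*(sa-sb))*(((a1+a2)^2 + 2*(a1*a2)) - ((b1+b2)^2 + 2*(b1*b2)))
          + l - sa*m + k - sb*n) = - E"
    using compatE0[OF assms(1-7)] unfolding E_def m_def n_def l_def k_def sa_def sb_def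
      g1_def g2_def g3_def g4_def qq .
  have key: "AB_conditions a1 a2 b1 b2 Ca1 Ca2 Cb1 Cb2 A B \<longleftrightarrow>
     degree A \<le> 4 \<and> degree B \<le> 4 \<and>
     HF a1 a2 g1 g2 (coeff A 0) (coeff A 1) (coeff A 2) (coeff A 3) (coeff A 4) \<and>
     HF b1 b2 g3 g4 (coeff B 0) (coeff B 1) (coeff B 2) (coeff B 3) (coeff B 4) \<and>
     coeff A 4 = s0 \<and> coeff B 4 = - s0 \<and> E = 0" for A B
  proof -
    have "AB_conditions a1 a2 b1 b2 Ca1 Ca2 Cb1 Cb2 A B \<longleftrightarrow>
     degree A \<le> 4 \<and> degree B \<le> 4 \<and>
     HF a1 a2 g1 g2 (coeff A 0) (coeff A 1) (coeff A 2) (coeff A 3) (coeff A 4) \<and>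
     HF b1 b2 g3 g4 (coeff B 0) (coeff B 1) (coeff B 2) (coeff B 3) (coeff B 4) \<and>
     (coeff A 4 = - coeff B 4 \<and> -2*sa*coeff A 4 + m = -(-2*sb*coeff B 4 + n) \<and>
      ((a1+a2)^2 + 2*(a1*a2))*coeff A 4 + l - sa*m = -(((b1+b2)^2 + 2*(b1*b2))*coeff B 4 + k - sb*n))"
      unfolding AB_iff herm[OF nea] herm[OF neb] g1_def[symmetric] g2_def[symmetric]
        g3_def[symmetric] g4_def[symmetric]
      unfolding HF_def Let_def m_def[symmetric] l_def[symmetric] n_def[symmetric] k_def[symmetric]
        sa_def sb_def
      by auto
    also have "\<dots> \<longleftrightarrow> degree A \<le> 4 \<and> degree B \<le> 4 \<and>
     HF a1 a2 g1 g2 (coeff A 0) (coeff A 1) (coeff A 2) (coeff A 3) (coeff A 4) \<and>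
     HF b1 b2 g3 g4 (coeff B 0) (coeff B 1) (coeff B 2) (coeff B 3) (coeff B 4) \<and>
     coeff A 4 = s0 \<and> coeff B 4 = - s0 \<and> E = 0"
      unfolding link[OF nes] cE s0_def by auto
    finally show ?thesis .
  qed
  define PA where "PA = hpoly a1 a2 g1 g2 s0"
  define PB where "PB = hpoly b1 b2 g3 g4 (-s0)"
  have PAB: "E = 0 \<Longrightarrow> AB_conditions a1 a2 b1 b2 Ca1 Ca2 Cb1 Cb2 PA PB"
    unfolding key PA_def PB_def using hpoly_deg hpoly_HF[of a1 a2 g1 g2 s0] hpoly_HF[of b1 b2 g3 g4 "-s0"] by auto
  have uniq: "AB_conditions a1 a2 b1 b2 Ca1 Ca2 Cb1 Cb2 A B \<Longrightarrow> A = PA \<and> B = PB" for A B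
    unfolding key PA_def PB_def using HF_unique by metis
  have s0F: "s0 = 0 \<longleftrightarrow> F"
  proof -
    have mn: "m + n = 2 * (1 / (a2 - a1)^2 * (1 / Ca1 + 1 / Ca2) - 1 / (b2 - b1)^2 * (1 / Cb1 + 1 / Cb2))"
      unfolding m_def n_def g1_def g2_def g3_def g4_def by (rule mnF[OF assms(1) assms(3-7)])
    have "s0 = 0 \<longleftrightarrow> m + n = 0" unfolding s0_def using nes by simp
    also have "\<dots> \<longleftrightarrow> F" unfolding F_def mn by (simp only: two_diff_eq)
    finally show ?thesis .
  qed
  have c1: "coeff A 1 = -2*(a1+a2)*(a1*a2)*s0 + (a1*a2)*m - (a1+a2)*l"
    "coeff B 1 = -2*(b1+b2)*(b1*b2)*(-s0) + (b1*b2)*n - (b1+b2)*k"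
    if "AB_conditions a1 a2 b1 b2 Ca1 Ca2 Cb1 Cb2 A B" for A B
    using that unfolding key HF_def Let_def m_def l_def n_def k_def by auto
  have gg: "(a1*a2)*m - (a1+a2)*l + ((b1*b2)*n - (b1+b2)*k) = 2 * (1 / (a2 - a1)^2 * (a2 * (2 * a1 + a2) / Ca1 + a1 * (2 * a2 + a1) / Ca2)
        - 1 / (b2 - b1)^2 * (b2 * (2 * b1 + b2) / Cb1 + b1 * (2 * b2 + b1) / Cb2))"
    unfolding m_def n_def l_def k_def g1_def g2_def g3_def g4_def by (rule GG[OF assms(1) assms(3-7)])
  have Gi: "(a1*a2)*m - (a1+a2)*l + ((b1*b2)*n - (b1+b2)*k) = 0 \<longleftrightarrow> G"
    unfolding G_def gg by (simp only: two_diff_eq)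
  show ?thesis
  proof (intro conjI allI impI)
    show "(\<exists>A B. AB_conditions a1 a2 b1 b2 Ca1 Ca2 Cb1 Cb2 A B) \<longleftrightarrow> E = 0"
    proof
      assume "\<exists>A B. AB_conditions a1 a2 b1 b2 Ca1 Ca2 Cb1 Cb2 A B"
      then obtain A B where "AB_conditions a1 a2 b1 b2 Ca1 Ca2 Cb1 Cb2 A B" by blast
      thus "E = 0" unfolding key by simp
    next
      assume "E = 0"
      thus "\<exists>A B. AB_conditions a1 a2 b1 b2 Ca1 Ca2 Cb1 Cb2 A B" using PAB by blast
    qed
  next
    assume "E = 0"
    show "\<exists>!AB. AB_conditions a1 a2 b1 b2 Ca1 Ca2 Cb1 Cb2 (fst AB) (snd AB)"
    proof (rule ex1I[of _ "(PA, PB)"])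
      show "AB_conditions a1 a2 b1 b2 Ca1 Ca2 Cb1 Cb2 (fst (PA, PB)) (snd (PA, PB))"
        using PAB \<open>E = 0\<close> by simp
    next
      fix AB assume "AB_conditions a1 a2 b1 b2 Ca1 Ca2 Cb1 Cb2 (fst AB) (snd AB)"
      hence "fst AB = PA \<and> snd AB = PB" by (rule uniq)
      thus "AB = (PA, PB)" by (simp add: prod_eq_iff)
    qed
  next
    fix A B assume H: "AB_conditions a1 a2 b1 b2 Ca1 Ca2 Cb1 Cb2 A B"
    have "coeff A 4 = s0" using H unfolding key by simp
    thus "coeff A 4 = 0 \<longleftrightarrow> F" using s0F by simp
  next
    fix A B assume H: "AB_conditions a1 a2 b1 b2 Ca1 Ca2 Cb1 Cb2 A B" and "F" "G"
    have "coeff A 4 = s0" using H unfolding key by simp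
    thus "coeff A 4 = 0" using s0F \<open>F\<close> by simp
    show "coeff A 1 = - coeff B 1" using c1[OF H] s0F \<open>F\<close> Gi \<open>G\<close> by simp
  qed
qed

end
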